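(* There exists a function $\delta$, defined on pairs of partitions, with the following two properties. (i) For every $T\ge 1$, every $K\ge 1$ and every two partitions $P=\{P_1,\dots,P_K\}$ and $Q=\{Q_1,\dots,Q_K\}$ of $\{1,\dots,T\}$ into $K$ nonempty clusters each, with clusters indexed so that $Q_k$ is regarded as the counterpart of $P_k$, we have $$\|M_P-M_Q\|_F^2 \;=\; 2\sum_{k=1}^K \frac{\epsilon_{k\to}+\epsilon_{\to k}}{|P_k|}\,\bigl(1+\delta(P,Q)\bigr).$$ (ii) The function $\delta$ satisfies $$\sup\bigl\{\,|\delta(P,Q)| \;:\; T\ge 1,\ K\ge 1,\ P,Q \text{ as in (i)},\ K\cdot m(P,Q)\le \epsilon\,\bigr\}\;\longrightarrow\;0 \quad\text{as } \epsilon\to 0 .$$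
   Context: For a partition $P$ of $\{1,\dots,T\}$ into nonempty clusters $P_1,\dots,P_K$, its rescaled equivalence matrix $M_P\in\mathbb{R}^{T\times T}$ is defined by $(M_P)_{ij}=1/|P_k|$ if $i$ and $j$ both lie in the same cluster $P_k$, and $(M_P)_{ij}=0$ otherwise; equivalently $M_P=Y(Y^\top Y)^{-1}Y^\top$ where $Y\in\{0,1\}^{T\times K}$ is the assignment matrix with $Y_{ik}=1$ iff $i\in P_k$. $\|\cdot\|_F$ is the Frobenius norm. For two partitions $P,Q$ as in the claim: for $k\ne l$, $\epsilon_{k\to l}=|P_k\cap Q_l|$; the outer flow is $\epsilon_{k\to}=\sum_{l\ne k}\epsilon_{k\to l}$; the inner flow is $\epsilon_{\to k}=\sum_{j\ne k}\epsilon_{j\to k}$; and $m(P,Q)=\max_{k\ne l}\dfrac{\epsilon_{k\to l}}{\min(|P_k|,|P_l|)}$ (with $m(P,Q)=0$ if $K=1$). *)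

theory Defs
  imports Main "HOL-Library.Disjoint_Sets" Complex_Main
begin

text \<open>An indexed partition of {1..T} into K nonempty clusters P 1, ..., P K
  (values of P outside {1..K} are irrelevant).\<close>
definition is_partition :: "nat \<Rightarrow> nat \<Rightarrow> (nat \<Rightarrow> nat set) \<Rightarrow> bool" where
  "is_partition T K P \<longleftrightarrow>
     (\<forall>k\<in>{1..K}. P k \<noteq> {}) \<and>
     (\<forall>k\<in>{1..K}. \<forall>l\<in>{1..K}. k \<noteq> l \<longrightarrow> P k \<inter> P l = {}) \<and>
     (\<Union>k\<in>{1..K}. P k) = {1..T}"

text \<open>Rescaled equivalence matrix, entries indexed by i, j in {1..T}:
  (M_P) i j = 1/|P_k| if i, j both lie in P_k, else 0 (clusters are disjoint,
  so at most one summand is nonzero).\<close>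
definition resc_equiv :: "nat \<Rightarrow> (nat \<Rightarrow> nat set) \<Rightarrow> nat \<Rightarrow> nat \<Rightarrow> real" where
  "resc_equiv K P i j = (\<Sum>k\<in>{1..K}. if i \<in> P k \<and> j \<in> P k then 1 / real (card (P k)) else 0)"

definition frob_sq_diff :: "nat \<Rightarrow> (nat \<Rightarrow> nat \<Rightarrow> real) \<Rightarrow> (nat \<Rightarrow> nat \<Rightarrow> real) \<Rightarrow> real" where
  "frob_sq_diff T A B = (\<Sum>i\<in>{1..T}. \<Sum>j\<in>{1..T}. (A i j - B i j)\<^sup>2)"

definition flow :: "(nat \<Rightarrow> nat set) \<Rightarrow> (nat \<Rightarrow> nat set) \<Rightarrow> nat \<Rightarrow> nat \<Rightarrow> nat" where
  "flow P Q k l = card (P k \<inter> Q l)"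

definition out_flow :: "nat \<Rightarrow> (nat \<Rightarrow> nat set) \<Rightarrow> (nat \<Rightarrow> nat set) \<Rightarrow> nat \<Rightarrow> nat" where
  "out_flow K P Q k = (\<Sum>l\<in>{1..K} - {k}. flow P Q k l)"

definition in_flow :: "nat \<Rightarrow> (nat \<Rightarrow> nat set) \<Rightarrow> (nat \<Rightarrow> nat set) \<Rightarrow> nat \<Rightarrow> nat" where
  "in_flow K P Q k = (\<Sum>j\<in>{1..K} - {k}. flow P Q j k)"

definition m_PQ :: "nat \<Rightarrow> (nat \<Rightarrow> nat set) \<Rightarrow> (nat \<Rightarrow> nat set) \<Rightarrow> real" where
  "m_PQ K P Q = (if K = 1 then 0 else
     Max {real (flow P Q k l) / real (min (card (P k)) (card (P l))) | k l.
            k \<in> {1..K} \<and> l \<in> {1..K} \<and> k \<noteq> l})"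

end

theory Submission imports Defs begin

lemma part_sub:
  assumes "is_partition T K P" "k \<in> {1..K}"
  shows "P k \<subseteq> {1..T}" "finite (P k)" "card (P k) > 0"
proof -
  show s: "P k \<subseteq> {1..T}" using assms unfolding is_partition_def by blast
  show f: "finite (P k)" using s finite_subset by blast
  show "card (P k) > 0" using f assms unfolding is_partition_def by (simp add: card_gt_0_iff)
qed

lemma card_split:
  assumes "is_partition T K P" "is_partition T K Q" "k \<in> {1..K}"
  shows "card (P k) = (\<Sum>l\<in>{1..K}. card (P k \<inter> Q l))"
proof -
  have "P k = (\<Union>l\<in>{1..K}. P k \<inter> Q l)"
    using part_sub(1)[OF assms(1,3)] assms(2) unfolding is_partition_def by blast
  also have "card \<dots> = (\<Sum>l\<in>{1..K}. card (P k \<inter> Q l))"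
  proof (rule card_UN_disjoint)
    show "\<forall>i\<in>{1..K}. finite (P k \<inter> Q i)" using part_sub(2)[OF assms(1,3)] by blast
    show "\<forall>i\<in>{1..K}. \<forall>j\<in>{1..K}. i \<noteq> j \<longrightarrow> P k \<inter> Q i \<inter> (P k \<inter> Q j) = {}"
      using assms(2) unfolding is_partition_def by blast
  qed simp
  finally show ?thesis .
qed

lemma sum_ind:
  assumes "A \<subseteq> S" "finite S"
  shows "(\<Sum>i\<in>S. \<Sum>j\<in>S. if i \<in> A \<and> j \<in> A then c else 0) = real (card A)^2 * (c::real)"
proof -
  have "(\<Sum>i\<in>S. \<Sum>j\<in>S. if i \<in> A \<and> j \<in> A then c else 0) = (\<Sum>i\<in>S. if i \<in> A then real (card A) * c else 0)"
    apply (rule sum.cong, simp)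
    using assms by (auto simp add: sum.If_cases Int_absorb2 Int_absorb1 inf_commute)
  also have "\<dots> = real (card A)^2 * c"
    using assms by (simp add: sum.If_cases Int_absorb1 Int_absorb2 power2_eq_square)
  finally show ?thesis .
qed

lemma L1:
  assumes "\<forall>k\<in>{1..K}. P k \<subseteq> {1..T}" "\<forall>l\<in>{1..K}. Q l \<subseteq> {1..T}"
  shows "(\<Sum>i\<in>{1..T}. \<Sum>j\<in>{1..T}. resc_equiv K P i j * resc_equiv K Q i j)
     = (\<Sum>k\<in>{1..K}. \<Sum>l\<in>{1..K}. real (card (P k \<inter> Q l))^2 / (real (card (P k)) * real (card (Q l))))"
proof -
  have "(\<Sum>i\<in>{1..T}. \<Sum>j\<in>{1..T}. resc_equiv K P i j * resc_equiv K Q i j)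
    = (\<Sum>i\<in>{1..T}. \<Sum>j\<in>{1..T}. \<Sum>k\<in>{1..K}. \<Sum>l\<in>{1..K}.
          if i \<in> P k \<inter> Q l \<and> j \<in> P k \<inter> Q l then 1 / (real (card (P k)) * real (card (Q l))) else 0)"
    unfolding resc_equiv_def sum_product by (intro sum.cong refl) auto
  also have "\<dots> = (\<Sum>k\<in>{1..K}. \<Sum>l\<in>{1..K}. \<Sum>i\<in>{1..T}. \<Sum>j\<in>{1..T}.
          if i \<in> P k \<inter> Q l \<and> j \<in> P k \<inter> Q l then 1 / (real (card (P k)) * real (card (Q l))) else 0)"
  proof -
    have "\<And>i. (\<Sum>j\<in>{1..T}. \<Sum>k\<in>{1..K}. \<Sum>l\<in>{1..K}. if i \<in> P k \<inter> Q l \<and> j \<in> P k \<inter> Q l then 1 / (real (card (P k)) * real (card (Q l))) else (0::real))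
      = (\<Sum>k\<in>{1..K}. \<Sum>l\<in>{1..K}. \<Sum>j\<in>{1..T}. if i \<in> P k \<inter> Q l \<and> j \<in> P k \<inter> Q l then 1 / (real (card (P k)) * real (card (Q l))) else 0)"
      by (subst sum.swap, rule sum.cong, simp, rule sum.swap)
    then have "(\<Sum>i\<in>{1..T}. \<Sum>j\<in>{1..T}. \<Sum>k\<in>{1..K}. \<Sum>l\<in>{1..K}. if i \<in> P k \<inter> Q l \<and> j \<in> P k \<inter> Q l then 1 / (real (card (P k)) * real (card (Q l))) else (0::real))
      = (\<Sum>i\<in>{1..T}. \<Sum>k\<in>{1..K}. \<Sum>l\<in>{1..K}. \<Sum>j\<in>{1..T}. if i \<in> P k \<inter> Q l \<and> j \<in> P k \<inter> Q l then 1 / (real (card (P k)) * real (card (Q l))) else 0)"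
      by simp
    also have "\<dots> = (\<Sum>k\<in>{1..K}. \<Sum>l\<in>{1..K}. \<Sum>i\<in>{1..T}. \<Sum>j\<in>{1..T}. if i \<in> P k \<inter> Q l \<and> j \<in> P k \<inter> Q l then 1 / (real (card (P k)) * real (card (Q l))) else 0)"
      by (subst sum.swap, rule sum.cong, simp, rule sum.swap)
    finally show ?thesis .
  qed
  also have "\<dots> = (\<Sum>k\<in>{1..K}. \<Sum>l\<in>{1..K}. real (card (P k \<inter> Q l))^2 / (real (card (P k)) * real (card (Q l))))"
    apply (intro sum.cong refl)
    apply (subst sum_ind)
    using assms by auto
  finally show ?thesis .
qed


lemma diagK:
  assumes "is_partition T K P"
  shows "(\<Sum>k\<in>{1..K}. \<Sum>l\<in>{1..K}. real (card (P k \<inter> P l))^2 / (real (card (P k)) * real (card (P l)))) = real K"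
proof -
  have "(\<Sum>k\<in>{1..K}. \<Sum>l\<in>{1..K}. real (card (P k \<inter> P l))^2 / (real (card (P k)) * real (card (P l))))
     = (\<Sum>k\<in>{1..K}. \<Sum>l\<in>{1..K}. if l = k then 1 else 0)"
  proof (intro sum.cong refl)
    fix k l assume k: "k \<in> {1..K}" and l: "l \<in> {1..K}"
    show "real (card (P k \<inter> P l))^2 / (real (card (P k)) * real (card (P l))) = (if l = k then 1 else 0)"
    proof (cases "l = k")
      case True
      then show ?thesis using part_sub(3)[OF assms k] by (simp add: power2_eq_square)
    next
      case False
      then have "P k \<inter> P l = {}" using assms k l unfolding is_partition_def by blast
      then show ?thesis using False by simp
    qed
  qed
  also have "\<dots> = real K" by simp
  finally show ?thesis .
qed

lemma frob_expand:
  assumes "is_partition T K P" "is_partition T K Q"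
  shows "frob_sq_diff T (resc_equiv K P) (resc_equiv K Q) = 2 * real K
     - 2 * (\<Sum>k\<in>{1..K}. \<Sum>l\<in>{1..K}. real (card (P k \<inter> Q l))^2 / (real (card (P k)) * real (card (Q l))))"
proof -
  have sP: "\<forall>k\<in>{1..K}. P k \<subseteq> {1..T}" and sQ: "\<forall>k\<in>{1..K}. Q k \<subseteq> {1..T}"
    using part_sub(1) assms by blast+
  have e: "\<And>a b::real. (a - b)^2 = a*a + b*b - 2*(a*b)" by (simp add: power2_eq_square algebra_simps)
  have "frob_sq_diff T (resc_equiv K P) (resc_equiv K Q) =
     (\<Sum>i\<in>{1..T}. \<Sum>j\<in>{1..T}. resc_equiv K P i j * resc_equiv K P i j)
     + (\<Sum>i\<in>{1..T}. \<Sum>j\<in>{1..T}. resc_equiv K Q i j * resc_equiv K Q i j)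
     - 2 * (\<Sum>i\<in>{1..T}. \<Sum>j\<in>{1..T}. resc_equiv K P i j * resc_equiv K Q i j)"
    unfolding frob_sq_diff_def e by (simp add: sum.distrib sum_subtractf sum_distrib_left)
  also have "\<dots> = 2 * real K
     - 2 * (\<Sum>k\<in>{1..K}. \<Sum>l\<in>{1..K}. real (card (P k \<inter> Q l))^2 / (real (card (P k)) * real (card (Q l))))"
    unfolding L1[OF sP sP] L1[OF sQ sQ] L1[OF sP sQ] diagK[OF assms(1)] diagK[OF assms(2)] by simp
  finally show ?thesis .
qed

definition Sf :: "nat \<Rightarrow> (nat \<Rightarrow> nat set) \<Rightarrow> (nat \<Rightarrow> nat set) \<Rightarrow> real" where
  "Sf K P Q = (\<Sum>k\<in>{1..K}. real (out_flow K P Q k + in_flow K P Q k) / real (card (P k)))"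

definition Ef :: "nat \<Rightarrow> (nat \<Rightarrow> nat set) \<Rightarrow> (nat \<Rightarrow> nat set) \<Rightarrow> real" where
  "Ef K P Q = (\<Sum>k\<in>{1..K}. real (in_flow K P Q k)^2 / (real (card (P k)) * real (card (Q k))))
     + (\<Sum>k\<in>{1..K}. \<Sum>l\<in>{1..K}-{k}. real (flow P Q k l)^2 / (real (card (P k)) * real (card (Q l))))"

lemma pq_split:
  assumes "is_partition T K P" "is_partition T K Q" "k \<in> {1..K}"
  shows "card (P k) = flow P Q k k + out_flow K P Q k" "card (Q k) = flow P Q k k + in_flow K P Q k"
proof -
  show "card (P k) = flow P Q k k + out_flow K P Q k"
    unfolding card_split[OF assms] out_flow_def flow_def
    using assms(3) by (simp add: sum.remove)
  have "card (Q k) = (\<Sum>l\<in>{1..K}. card (Q k \<inter> P l))" by (rule card_split[OF assms(2,1,3)])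
  also have "\<dots> = (\<Sum>l\<in>{1..K}. flow P Q l k)" unfolding flow_def by (simp add: Int_commute)
  finally show "card (Q k) = flow P Q k k + in_flow K P Q k"
    unfolding in_flow_def using assms(3) by (simp add: sum.remove)
qed

lemma alg: fixes n u i :: real
  assumes "n+u>0" "n+i>0"
  shows "1 - n^2/((n+u)*(n+i)) = (u+i)/(n+u) - i^2/((n+u)*(n+i))"
proof -
  have "(u+i)/(n+u) = (u+i)*(n+i)/((n+u)*(n+i))" using assms by simp
  then have "(u+i)/(n+u) - i^2/((n+u)*(n+i)) = ((u+i)*(n+i) - i^2)/((n+u)*(n+i))" by (simp add: diff_divide_distrib)
  also have "\<dots> = ((n+u)*(n+i) - n^2)/((n+u)*(n+i))" by (simp add: power2_eq_square algebra_simps)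
  also have "\<dots> = 1 - n^2/((n+u)*(n+i))" using assms by (simp add: diff_divide_distrib)
  finally show ?thesis by simp
qed

lemma identity:
  assumes "is_partition T K P" "is_partition T K Q"
  shows "frob_sq_diff T (resc_equiv K P) (resc_equiv K Q) = 2 * (Sf K P Q - Ef K P Q)"
proof -
  have per: "1 - real (flow P Q k k)^2 / (real (card (P k)) * real (card (Q k)))
      - (\<Sum>l\<in>{1..K}-{k}. real (flow P Q k l)^2 / (real (card (P k)) * real (card (Q l))))
     = real (out_flow K P Q k + in_flow K P Q k) / real (card (P k))
      - real (in_flow K P Q k)^2 / (real (card (P k)) * real (card (Q k)))
      - (\<Sum>l\<in>{1..K}-{k}. real (flow P Q k l)^2 / (real (card (P k)) * real (card (Q l))))"
    if k: "k \<in> {1..K}" for k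
  proof -
    have p: "real (card (P k)) = real (flow P Q k k) + real (out_flow K P Q k)"
      and q: "real (card (Q k)) = real (flow P Q k k) + real (in_flow K P Q k)"
      using pq_split[OF assms k] by simp_all
    have pp: "real (card (P k)) > 0" using part_sub(3)[OF assms(1) k] by simp
    have qq: "real (card (Q k)) > 0" using part_sub(3)[OF assms(2) k] by simp
    have "1 - real (flow P Q k k)^2 / (real (card (P k)) * real (card (Q k)))
        = real (out_flow K P Q k + in_flow K P Q k) / real (card (P k))
          - real (in_flow K P Q k)^2 / (real (card (P k)) * real (card (Q k)))"
      using pp qq unfolding p q of_nat_add by (rule alg)
    then show ?thesis by simp
  qed
  have "frob_sq_diff T (resc_equiv K P) (resc_equiv K Q) = 2 * (\<Sum>k\<in>{1..K}. 1 - real (flow P Q k k)^2 / (real (card (P k)) * real (card (Q k)))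
      - (\<Sum>l\<in>{1..K}-{k}. real (flow P Q k l)^2 / (real (card (P k)) * real (card (Q l)))))"
    unfolding frob_expand[OF assms]
    by (simp add: sum_subtractf sum.remove flow_def algebra_simps)
  also have "\<dots> = 2 * (Sf K P Q - Ef K P Q)"
    unfolding Sf_def Ef_def using per by (simp add: sum_subtractf)
  finally show ?thesis .
qed


lemma m_bound:
  assumes "is_partition T K P" "k \<in> {1..K}" "l \<in> {1..K}" "k \<noteq> l"
  shows "real (flow P Q k l) \<le> m_PQ K P Q * min (real (card (P k))) (real (card (P l)))"
proof -
  define f where "f k l = real (flow P Q k l) / real (min (card (P k)) (card (P l)))" for k l
  have K1: "K \<noteq> 1" using assms(2-4) by auto
  have fin: "finite {f k l | k l. k \<in> {1..K} \<and> l \<in> {1..K} \<and> k \<noteq> l}"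
    by (rule finite_subset[of _ "(\<lambda>(k,l). f k l) ` ({1..K} \<times> {1..K})"]) auto
  have "f k l \<le> Max {f k l | k l. k \<in> {1..K} \<and> l \<in> {1..K} \<and> k \<noteq> l}"
    by (rule Max_ge[OF fin]) (use assms in blast)
  then have le: "f k l \<le> m_PQ K P Q" unfolding m_PQ_def f_def using K1 by simp
  have pos: "real (min (card (P k)) (card (P l))) > 0"
    using part_sub(3)[OF assms(1,2)] part_sub(3)[OF assms(1,3)] by simp
  have "real (flow P Q k l) = f k l * real (min (card (P k)) (card (P l)))"
    unfolding f_def using pos by simp
  also have "\<dots> \<le> m_PQ K P Q * real (min (card (P k)) (card (P l)))"
    by (rule mult_right_mono[OF le]) simp
  finally show ?thesis by simp
qed

lemma m_nonneg:
  assumes "is_partition T K P" "K \<ge> 1"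
  shows "m_PQ K P Q \<ge> 0"
proof (cases "K = 1")
  case True then show ?thesis unfolding m_PQ_def by simp
next
  case False
  then have "1 \<in> {1..K}" "2 \<in> {1..K}" using assms by auto
  have "0 \<le> real (flow P Q 1 2)" by simp
  also have "\<dots> \<le> m_PQ K P Q * min (real (card (P 1))) (real (card (P 2)))"
    by (rule m_bound[OF assms(1) \<open>1 \<in> {1..K}\<close> \<open>2 \<in> {1..K}\<close>]) simp
  finally show ?thesis
    using part_sub(3)[OF assms(1) \<open>1 \<in> {1..K}\<close>] part_sub(3)[OF assms(1) \<open>2 \<in> {1..K}\<close>]
    by (auto simp: zero_le_mult_iff min_le_iff_disj)
qed

lemma t1:
  fixes i p q d :: real
  assumes "i \<ge> 0" "p > 0" "q > 0" "i \<le> d * q"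
  shows "i^2 / (p * q) \<le> d * i / p"
proof -
  have "i / q \<le> d" using assms by (simp add: divide_le_eq)
  then have "(i/p) * (i/q) \<le> (i/p) * d" by (rule mult_left_mono) (use assms in simp)
  then show ?thesis by (simp add: power2_eq_square mult.commute)
qed

lemma flows_bound:
  assumes "is_partition T K P" "is_partition T K Q" "K \<ge> 1" "k \<in> {1..K}"
  shows "real (out_flow K P Q k) \<le> real K * m_PQ K P Q * real (card (P k))"
        "real (in_flow K P Q k) \<le> real K * m_PQ K P Q * real (card (P k))"
proof -
  have m0: "m_PQ K P Q \<ge> 0" by (rule m_nonneg[OF assms(1,3)])
  have c: "real (card ({1..K} - {k})) \<le> real K" using assms(4) by simp
  have "real (out_flow K P Q k) = (\<Sum>l\<in>{1..K}-{k}. real (flow P Q k l))" unfolding out_flow_def by simp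
  also have "\<dots> \<le> (\<Sum>l\<in>{1..K}-{k}. m_PQ K P Q * real (card (P k)))"
  proof (rule sum_mono)
    fix l assume l: "l \<in> {1..K}-{k}"
    have "real (flow P Q k l) \<le> m_PQ K P Q * min (real (card (P k))) (real (card (P l)))"
      using m_bound[OF assms(1,4)] l by auto
    also have "\<dots> \<le> m_PQ K P Q * real (card (P k))" by (rule mult_left_mono[OF _ m0]) simp
    finally show "real (flow P Q k l) \<le> m_PQ K P Q * real (card (P k))" .
  qed
  also have "\<dots> \<le> real K * m_PQ K P Q * real (card (P k))"
    using mult_right_mono[OF c, of "m_PQ K P Q * real (card (P k))"] m0 by (simp add: mult.assoc)
  finally show "real (out_flow K P Q k) \<le> real K * m_PQ K P Q * real (card (P k))" .
  have "real (in_flow K P Q k) = (\<Sum>l\<in>{1..K}-{k}. real (flow P Q l k))" unfolding in_flow_def by simp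
  also have "\<dots> \<le> (\<Sum>l\<in>{1..K}-{k}. m_PQ K P Q * real (card (P k)))"
  proof (rule sum_mono)
    fix l assume l: "l \<in> {1..K}-{k}"
    have "real (flow P Q l k) \<le> m_PQ K P Q * min (real (card (P l))) (real (card (P k)))"
      using m_bound[OF assms(1) _ assms(4)] l by auto
    also have "\<dots> \<le> m_PQ K P Q * real (card (P k))" by (rule mult_left_mono[OF _ m0]) simp
    finally show "real (flow P Q l k) \<le> m_PQ K P Q * real (card (P k))" .
  qed
  also have "\<dots> \<le> real K * m_PQ K P Q * real (card (P k))"
    using mult_right_mono[OF c, of "m_PQ K P Q * real (card (P k))"] m0 by (simp add: mult.assoc)
  finally show "real (in_flow K P Q k) \<le> real K * m_PQ K P Q * real (card (P k))" .
qed

lemma q_ge: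
  assumes "is_partition T K P" "is_partition T K Q" "K \<ge> 1" "k \<in> {1..K}"
    "real K * m_PQ K P Q \<le> 1/2"
  shows "real (card (P k)) \<le> 2 * real (card (Q k))"
proof -
  have "real (out_flow K P Q k) \<le> real K * m_PQ K P Q * real (card (P k))" by (rule flows_bound[OF assms(1-4)])
  also have "\<dots> \<le> 1/2 * real (card (P k))" by (rule mult_right_mono[OF assms(5)]) simp
  finally show ?thesis using pq_split[OF assms(1,2,4)] by simp
qed

lemma E_bound:
  assumes "is_partition T K P" "is_partition T K Q" "K \<ge> 1"
    "real K * m_PQ K P Q \<le> 1/2"
  shows "Ef K P Q \<le> 2 * (real K * m_PQ K P Q) * Sf K P Q"
proof -
  define m where "m = m_PQ K P Q"
  have m0: "m \<ge> 0" unfolding m_def by (rule m_nonneg[OF assms(1,3)])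
  have mK: "m \<le> real K * m" using m0 assms(3) by (simp add: mult_le_cancel_right1)
  have A: "real (in_flow K P Q k)^2 / (real (card (P k)) * real (card (Q k)))
      \<le> 2 * (real K * m) * real (in_flow K P Q k) / real (card (P k))" if k: "k \<in> {1..K}" for k
  proof (rule t1)
    show "real (card (P k)) > 0" "real (card (Q k)) > 0"
      using part_sub(3)[OF assms(1) k] part_sub(3)[OF assms(2) k] by simp_all
    have "real (in_flow K P Q k) \<le> real K * m * real (card (P k))"
      unfolding m_def by (rule flows_bound[OF assms(1-3) k])
    also have "\<dots> \<le> real K * m * (2 * real (card (Q k)))"
      by (rule mult_left_mono[OF q_ge[OF assms(1-3) k assms(4)]]) (use m0 in simp)
    finally show "real (in_flow K P Q k) \<le> 2 * (real K * m) * real (card (Q k))" by simp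
  qed simp
  have B: "real (flow P Q k l)^2 / (real (card (P k)) * real (card (Q l)))
      \<le> 2 * m * real (flow P Q k l) / real (card (P k))"
    if k: "k \<in> {1..K}" and l: "l \<in> {1..K}-{k}" for k l
  proof (rule t1)
    have l': "l \<in> {1..K}" using l by simp
    show "real (card (P k)) > 0" "real (card (Q l)) > 0"
      using part_sub(3)[OF assms(1) k] part_sub(3)[OF assms(2) l'] by simp_all
    have "real (flow P Q k l) \<le> m * min (real (card (P k))) (real (card (P l)))"
      unfolding m_def using m_bound[OF assms(1) k l'] l by auto
    also have "\<dots> \<le> m * real (card (P l))" by (rule mult_left_mono[OF _ m0]) simp
    also have "\<dots> \<le> m * (2 * real (card (Q l)))"
      by (rule mult_left_mono[OF q_ge[OF assms(1-3) l' assms(4)] m0])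
    finally show "real (flow P Q k l) \<le> 2 * m * real (card (Q l))" by simp
  qed simp
  have "Ef K P Q \<le> (\<Sum>k\<in>{1..K}. 2 * (real K * m) * real (in_flow K P Q k) / real (card (P k)))
      + (\<Sum>k\<in>{1..K}. \<Sum>l\<in>{1..K}-{k}. 2 * m * real (flow P Q k l) / real (card (P k)))"
    unfolding Ef_def by (intro add_mono sum_mono A B) auto
  also have "(\<Sum>k\<in>{1..K}. \<Sum>l\<in>{1..K}-{k}. 2 * m * real (flow P Q k l) / real (card (P k)))
      = (\<Sum>k\<in>{1..K}. 2 * m * real (out_flow K P Q k) / real (card (P k)))"
    unfolding out_flow_def by (simp add: sum_divide_distrib sum_distrib_left)
  also have "\<dots> \<le> (\<Sum>k\<in>{1..K}. 2 * (real K * m) * real (out_flow K P Q k) / real (card (P k)))"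
    by (intro sum_mono divide_right_mono mult_right_mono) (use mK in auto)
  also have "(\<Sum>k\<in>{1..K}. 2 * (real K * m) * real (in_flow K P Q k) / real (card (P k)))
      + (\<Sum>k\<in>{1..K}. 2 * (real K * m) * real (out_flow K P Q k) / real (card (P k)))
      = 2 * (real K * m) * Sf K P Q"
    unfolding Sf_def by (simp add: sum_distrib_left add_divide_distrib sum.distrib[symmetric] algebra_simps)
  finally show ?thesis unfolding m_def by simp
qed

lemma S_nonneg: "Sf K P Q \<ge> 0" unfolding Sf_def by (intro sum_nonneg) simp
lemma E_nonneg: "Ef K P Q \<ge> 0" unfolding Ef_def by (intro add_nonneg_nonneg sum_nonneg) simp_all

lemma S0:
  assumes "is_partition T K P" "is_partition T K Q" "Sf K P Q = 0"
  shows "Ef K P Q = 0"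
proof -
  have z: "real (out_flow K P Q k + in_flow K P Q k) / real (card (P k)) = 0" if "k \<in> {1..K}" for k
    using assms(3) unfolding Sf_def by (subst (asm) sum_nonneg_eq_0_iff) (use that in auto)
  have o: "out_flow K P Q k = 0" "in_flow K P Q k = 0" if k: "k \<in> {1..K}" for k
    using z[OF k] part_sub(3)[OF assms(1) k] by auto
  have f: "flow P Q k l = 0" if "k \<in> {1..K}" "l \<in> {1..K}-{k}" for k l
    using o(1)[OF that(1)] that(2) unfolding out_flow_def by simp
  show ?thesis unfolding Ef_def using o f by simp
qed

theorem theoremA:
  shows "\<exists>\<delta> :: nat \<Rightarrow> nat \<Rightarrow> (nat \<Rightarrow> nat set) \<Rightarrow> (nat \<Rightarrow> nat set) \<Rightarrow> real.
    (\<forall>T K P Q. T \<ge> 1 \<longrightarrow> K \<ge> 1 \<longrightarrow> is_partition T K P \<longrightarrow> is_partition T K Q \<longrightarrow>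
       frob_sq_diff T (resc_equiv K P) (resc_equiv K Q) =
         2 * (\<Sum>k\<in>{1..K}. real (out_flow K P Q k + in_flow K P Q k) / real (card (P k)))
           * (1 + \<delta> T K P Q)) \<and>
    (\<forall>e>0. \<exists>\<eta>>0. \<forall>T K P Q. T \<ge> 1 \<longrightarrow> K \<ge> 1 \<longrightarrow> is_partition T K P \<longrightarrow> is_partition T K Q \<longrightarrow>
       real K * m_PQ K P Q \<le> \<eta> \<longrightarrow> \<bar>\<delta> T K P Q\<bar> \<le> e)"
proof (intro exI[of _ "\<lambda>T K P Q. if Sf K P Q = 0 then 0 else - Ef K P Q / Sf K P Q"] conjI allI impI)
  fix T K P Q
  assume "T \<ge> 1" "K \<ge> (1::nat)" and P: "is_partition T K P" and Q: "is_partition T K Q"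
  show "frob_sq_diff T (resc_equiv K P) (resc_equiv K Q) =
         2 * (\<Sum>k\<in>{1..K}. real (out_flow K P Q k + in_flow K P Q k) / real (card (P k)))
           * (1 + (if Sf K P Q = 0 then 0 else - Ef K P Q / Sf K P Q))"
    unfolding identity[OF P Q] Sf_def[symmetric]
    using S0[OF P Q] by (auto simp: field_simps)
next
  fix e :: real assume e: "e > 0"
  show "\<exists>\<eta>>0. \<forall>T K P Q. T \<ge> 1 \<longrightarrow> K \<ge> 1 \<longrightarrow> is_partition T K P \<longrightarrow> is_partition T K Q \<longrightarrow>
       real K * m_PQ K P Q \<le> \<eta> \<longrightarrow> \<bar>if Sf K P Q = 0 then 0 else - Ef K P Q / Sf K P Q\<bar> \<le> e"
  proof (intro exI[of _ "min (1/2) (e/2)"] conjI allI impI)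
    show "min (1/2) (e/2) > (0::real)" using e by simp
    fix T K P Q
    assume "T \<ge> 1" and K: "K \<ge> (1::nat)" and P: "is_partition T K P" and Q: "is_partition T K Q"
      and h: "real K * m_PQ K P Q \<le> min (1/2) (e/2)"
    show "\<bar>if Sf K P Q = 0 then 0 else - Ef K P Q / Sf K P Q\<bar> \<le> e"
    proof (cases "Sf K P Q = 0")
      case True then show ?thesis using e by simp
    next
      case False
      then have Sp: "Sf K P Q > 0" using S_nonneg[of K P Q] by simp
      have "Ef K P Q \<le> 2 * (real K * m_PQ K P Q) * Sf K P Q"
        by (rule E_bound[OF P Q K]) (use h in simp)
      also have "\<dots> \<le> e * Sf K P Q" using h Sp by (intro mult_right_mono) auto
      finally have "Ef K P Q / Sf K P Q \<le> e" using Sp by (simp add: divide_le_eq)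
      then show ?thesis using False E_nonneg[of K P Q] Sp by simp
    qed
  qed
qed

end
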